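(* For each $m\ge1$, the sequence $(v_{k;m})_{k\ge0}$ is bounded above by $b=v_{k;0}$, is strictly decreasing in $k$, and converges to $b/(m+1)$ as $k\to\infty$.
   Context: Fix $b\ge2$ and $d\in\{0,\dots,b-1\}$. A string is a finite sequence $X=(d_l,\dots,d_1)$ of digits in $\{0,\dots,b-1\}$ (leading zeros allowed), of length $|X|=l\ge0$; its value is $n(X)=\sum_{i=1}^{l}d_ib^{i-1}$ ($0$ for the empty string). For $k\ge0$, $\mu_k=\sum_{X}b^{-|X|}\delta_{n(X)/b^{|X|}}$, the sum over all strings $X$ containing $d$ exactly $k$ times; it is a finite measure on $[0,1)$ of total mass $b$. The complementary moments are $v_{k;m}=\int_{[0,1)}(1-x)^m\,d\mu_k(x)$. *)

theory Defs
  imports "HOL-Probability.Probability"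
begin

text \<open>Strings over the digit alphabet {0,...,b-1}, written as lists (d_l, ..., d_1),
  most significant digit first; leading zeros allowed.\<close>

definition digit_strings :: "nat \<Rightarrow> nat list set" where
  "digit_strings b = {X. set X \<subseteq> {..<b}}"

definition str_value :: "nat \<Rightarrow> nat list \<Rightarrow> nat" where
  "str_value b X = foldl (\<lambda>acc x. acc * b + x) 0 X"

definition occ :: "nat \<Rightarrow> nat list \<Rightarrow> nat" where
  "occ d X = length (filter (\<lambda>x. x = d) X)"

text \<open>mu_k = sum over strings X containing d exactly k times of b^(-|X|) times the
  Dirac mass at n(X)/b^|X|: the push-forward along X |-> n(X)/b^|X| of the weighted
  counting measure on such strings, as a measure on the Borel sets of the reals.\<close>
definition mu :: "nat \<Rightarrow> nat \<Rightarrow> nat \<Rightarrow> real measure" where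
  "mu b d k = distr
     (density (count_space UNIV)
        (\<lambda>X::nat list. if X \<in> digit_strings b \<and> occ d X = k
                       then ennreal (1 / real b ^ length X) else 0))
     borel (\<lambda>X. real (str_value b X) / real b ^ length X)"

definition v :: "nat \<Rightarrow> nat \<Rightarrow> nat \<Rightarrow> nat \<Rightarrow> real" where
  "v b d k m = (LINT x:{0..<1}|mu b d k. (1 - x) ^ m)"

end

theory Submission
  imports Defs
begin

lemma str_value_Cons_gen: "foldl (\<lambda>acc x. acc * b + x) (a::nat) X = a * b ^ length X + foldl (\<lambda>acc x. acc * b + x) 0 X"
proof (induction X arbitrary: a)
  case Nil then show ?case by simp
next
  case (Cons x X)
  show ?case
    apply (simp only: foldl_Cons)
    apply (subst Cons.IH) apply (subst (2) Cons.IH)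
    by (simp add: algebra_simps)
qed

lemma str_value_Cons: "str_value b (c # X) = c * b ^ length X + str_value b X"
  unfolding str_value_def by (simp only: foldl_Cons, subst str_value_Cons_gen) simp

lemma str_value_less: "set X \<subseteq> {..<b} \<Longrightarrow> str_value b X < b ^ length X"
proof (induction X)
  case Nil then show ?case by (simp add: str_value_def)
next
  case (Cons c X)
  then have c: "c < b" and IH: "str_value b X < b ^ length X" by auto
  have "c * b ^ length X + str_value b X < c * b ^ length X + b ^ length X" using IH by simp
  also have "\<dots> = (c+1) * b ^ length X" by simp
  also have "\<dots> \<le> b * b ^ length X" using c by (intro mult_right_mono) auto
  finally show ?case by (simp add: str_value_Cons)
qed

definition strs :: "nat \<Rightarrow> nat \<Rightarrow> nat list set" where
  "strs b l = {X. set X \<subseteq> {..<b} \<and> length X = l}"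

definition xv :: "nat \<Rightarrow> nat list \<Rightarrow> real" where
  "xv b X = real (str_value b X) / real b ^ length X"

definition a :: "nat \<Rightarrow> nat \<Rightarrow> nat \<Rightarrow> nat \<Rightarrow> nat \<Rightarrow> real" where
  "a b d k l m = (\<Sum>X\<in>strs b l. if occ d X = k then (1 - xv b X) ^ m / real b ^ l else 0)"

lemma finite_strs: "finite (strs b l)"
  unfolding strs_def using finite_lists_length_eq[of "{..<b}" l] by simp

lemma xv_range: "b \<ge> 2 \<Longrightarrow> set X \<subseteq> {..<b} \<Longrightarrow> 0 \<le> xv b X \<and> xv b X < 1"
proof -
  assume b: "b \<ge> 2" and s: "set X \<subseteq> {..<b}"
  have "real (str_value b X) < real b ^ length X"
    using str_value_less[OF s] by (metis of_nat_less_iff of_nat_power)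
  moreover have "real b ^ length X > 0" using b by simp
  ultimately show ?thesis unfolding xv_def by (simp add: divide_less_eq)
qed

lemma a_nonneg: "b \<ge> 2 \<Longrightarrow> a b d k l m \<ge> 0"
  unfolding a_def
proof (intro sum_nonneg)
  fix X assume "b \<ge> 2" "X \<in> strs b l"
  then have "xv b X < 1" using xv_range[of b X] by (auto simp: strs_def)
  then show "0 \<le> (if occ d X = k then (1 - xv b X) ^ m / real b ^ l else 0)" by auto
qed

lemma v_conv:
  assumes b: "b \<ge> 2" and sm: "summable (\<lambda>l. a b d k l m)"
  shows "v b d k m = (\<Sum>l. a b d k l m)"
proof -
  define F where "F x = indicator {0..<1::real} x * (1 - x) ^ m" for x
  define h where "h X = (if X \<in> digit_strings b \<and> occ d X = k then (1 - xv b X) ^ m / real b ^ length X else 0)" for X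
  have F0: "F x \<ge> 0" for x unfolding F_def by (auto simp: indicator_def)
  have "v b d k m = integral\<^sup>L (mu b d k) F"
    unfolding v_def F_def set_lebesgue_integral_def by simp
  also have "\<dots> = enn2real (\<integral>\<^sup>+ x. ennreal (F x) \<partial>mu b d k)"
    by (rule integral_eq_nn_integral) (auto simp: F_def[abs_def] F0[unfolded F_def] mu_def measurable_distr_eq1)
  also have "(\<integral>\<^sup>+ x. ennreal (F x) \<partial>mu b d k) = (\<integral>\<^sup>+ X. ennreal (h X) \<partial>count_space UNIV)"
    unfolding mu_def
    apply (subst nn_integral_distr)
      apply simp apply (simp add: F_def[abs_def])
    apply (subst nn_integral_density)
      apply simp apply simp
    apply (rule nn_integral_cong)
    using xv_range[OF b]
    apply (auto simp: h_def F_def digit_strings_def xv_def ennreal_mult'[symmetric] indicator_def)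
    done
  also have "\<dots> = (\<Sum>l. ennreal (a b d k l m))"
  proof -
    have h0: "h X \<ge> 0" for X using xv_range[OF b, of X] by (auto simp: h_def digit_strings_def)
    have pt: "ennreal (h X) = (\<Sum>l. ennreal (h X) * indicator (strs b l) X)" for X
    proof (cases "X \<in> digit_strings b")
      case True
      then have "(\<lambda>l. ennreal (h X) * indicator (strs b l) X) = (\<lambda>l. if l = length X then ennreal (h X) else 0)"
        by (auto simp: strs_def digit_strings_def indicator_def)
      then show ?thesis using sums_unique[OF sums_single[of "length X" "\<lambda>_. ennreal (h X)"]] by simp
    next
      case False
      then show ?thesis by (simp add: h_def)
    qed
    have "(\<integral>\<^sup>+ X. ennreal (h X) \<partial>count_space UNIV) = (\<integral>\<^sup>+ X. (\<Sum>l. ennreal (h X) * indicator (strs b l) X) \<partial>count_space UNIV)"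
      using pt by simp
    also have "\<dots> = (\<Sum>l. \<integral>\<^sup>+ X. ennreal (h X) * indicator (strs b l) X \<partial>count_space UNIV)"
      by (rule nn_integral_suminf) simp
    also have "\<dots> = (\<Sum>l. ennreal (a b d k l m))"
    proof (rule suminf_cong)
      fix l
      have "(\<integral>\<^sup>+ X. ennreal (h X) * indicator (strs b l) X \<partial>count_space UNIV) = (\<integral>\<^sup>+ X. ennreal (h X) \<partial>count_space (strs b l))"
        by (simp add: nn_integral_count_space_indicator)
      also have "\<dots> = (\<Sum>X\<in>strs b l. ennreal (h X))"
        by (rule nn_integral_count_space_finite[OF finite_strs])
      also have "\<dots> = ennreal (\<Sum>X\<in>strs b l. h X)"
        using h0 by simp
      also have "(\<Sum>X\<in>strs b l. h X) = a b d k l m"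
        unfolding a_def by (rule sum.cong) (auto simp: h_def strs_def digit_strings_def)
      finally show "(\<integral>\<^sup>+ X. ennreal (h X) * indicator (strs b l) X \<partial>count_space UNIV) = ennreal (a b d k l m)" .
    qed
    finally show ?thesis .
  qed
  also have "\<dots> = ennreal (\<Sum>l. a b d k l m)"
    by (rule suminf_ennreal2[OF a_nonneg[OF b] sm])
  finally show ?thesis using suminf_nonneg[OF sm a_nonneg[OF b]] by simp
qed

definition e :: "nat \<Rightarrow> nat \<Rightarrow> real" where "e b c = real b - 1 - real c"

definition Wa :: "nat \<Rightarrow> nat \<Rightarrow> nat \<Rightarrow> nat \<Rightarrow> nat \<Rightarrow> nat \<Rightarrow> real" where
  "Wa b d c k l j = (if c = d then (if k = 0 then 0 else a b d (k-1) l j) else a b d k l j)"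

lemma occ_Cons: "occ d (c # X) = (if c = d then 1 else 0) + occ d X"
  by (simp add: occ_def)

lemma xv_Cons: "b \<ge> 2 \<Longrightarrow> 1 - xv b (c # X) = (e b c + (1 - xv b X)) / real b"
  unfolding xv_def e_def str_value_Cons
  by (simp add: field_simps)

lemma term_eq:
  assumes b: "b \<ge> 2" and X: "length X = l"
  shows "(1 - xv b (c#X))^m / real b ^ Suc l = (1/real b^(m+1)) * (\<Sum>j\<le>m. of_nat (m choose j) * e b c^(m-j) * ((1 - xv b X)^j / real b ^ l))"
proof -
  have "(1 - xv b (c#X))^m = (e b c + (1 - xv b X))^m / real b ^ m"
    using xv_Cons[OF b] by (simp add: power_divide)
  also have "(e b c + (1 - xv b X))^m = (\<Sum>j\<le>m. of_nat (m choose j) * (1 - xv b X)^j * e b c^(m-j))"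
    by (subst add.commute, rule binomial_ring)
  finally show ?thesis
    by (simp add: sum_divide_distrib sum_distrib_left field_simps)
qed

lemma strs_Suc: "strs b (Suc l) = (\<lambda>(c,X). c # X) ` ({..<b} \<times> strs b l)"
  unfolding strs_def
  by (auto simp: image_iff length_Suc_conv)

lemma a_rec:
  assumes b: "b \<ge> 2"
  shows "a b d k (Suc l) m = (1/real b^(m+1)) * (\<Sum>c<b. \<Sum>j\<le>m. of_nat (m choose j) * e b c^(m-j) * Wa b d c k l j)"
proof -
  define f where "f X = (if occ d X = k then (1 - xv b X) ^ m / real b ^ Suc l else 0)" for X
  have inj: "inj_on (\<lambda>(c,X). c # X) ({..<b} \<times> strs b l)" by (auto simp: inj_on_def)
  have "a b d k (Suc l) m = (\<Sum>X\<in>strs b (Suc l). f X)" unfolding a_def f_def by simp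
  also have "\<dots> = (\<Sum>c<b. \<Sum>X\<in>strs b l. f (c # X))"
    unfolding strs_Suc sum.reindex[OF inj] sum.cartesian_product by (simp add: case_prod_beta)
  also have "\<dots> = (\<Sum>c<b. (1/real b^(m+1)) * (\<Sum>j\<le>m. of_nat (m choose j) * e b c^(m-j) * Wa b d c k l j))"
  proof (rule sum.cong[OF refl])
    fix c assume "c \<in> {..<b}"
    have "(\<Sum>X\<in>strs b l. f (c # X)) = (\<Sum>X\<in>strs b l. (1/real b^(m+1)) * (\<Sum>j\<le>m. of_nat (m choose j) * e b c^(m-j) *
             (if occ d (c#X) = k then (1 - xv b X)^j / real b ^ l else 0)))"
    proof (rule sum.cong[OF refl])
      fix X assume "X \<in> strs b l"
      then have len: "length X = l" by (simp add: strs_def)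
      show "f (c # X) = (1/real b^(m+1)) * (\<Sum>j\<le>m. of_nat (m choose j) * e b c^(m-j) *
             (if occ d (c#X) = k then (1 - xv b X)^j / real b ^ l else 0))"
        unfolding f_def using term_eq[OF b len, of c m] by auto
    qed
    also have "\<dots> = (1/real b^(m+1)) * (\<Sum>j\<le>m. of_nat (m choose j) * e b c^(m-j) *
             (\<Sum>X\<in>strs b l. (if occ d (c#X) = k then (1 - xv b X)^j / real b ^ l else 0)))"
      by (simp add: sum_distrib_left sum.swap[of _ "strs b l"] mult.assoc)
    also have "(\<lambda>j. (\<Sum>X\<in>strs b l. (if occ d (c#X) = k then (1 - xv b X)^j / real b ^ l else 0))) = Wa b d c k l"
    proof
      fix j
      show "(\<Sum>X\<in>strs b l. (if occ d (c#X) = k then (1 - xv b X)^j / real b ^ l else 0)) = Wa b d c k l j"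
        unfolding Wa_def a_def occ_Cons by (cases "c = d"; cases k) (auto intro!: sum.cong)
    qed
    finally show "(\<Sum>X\<in>strs b l. f (c # X)) = (1/real b^(m+1)) * (\<Sum>j\<le>m. of_nat (m choose j) * e b c^(m-j) * Wa b d c k l j)" .
  qed
  finally show ?thesis by (simp add: sum_distrib_left)
qed

lemma a_zero: "a b d k 0 m = (if k = 0 then 1 else 0)"
proof -
  have "strs b 0 = {[]}" by (auto simp: strs_def)
  then show ?thesis by (simp add: a_def occ_def xv_def str_value_def)
qed


lemma summable_rec:
  fixes s t :: "nat \<Rightarrow> real"
  assumes s0: "\<And>l. s l \<ge> 0" and t0: "\<And>l. t l \<ge> 0" and r: "0 \<le> r" "r < 1"
    and rec: "\<And>l. s (Suc l) \<le> r * s l + t l" and st: "summable t"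
  shows "summable s"
proof (rule summableI_nonneg_bounded[OF s0])
  fix n
  define P where "P n = (\<Sum>l<n. s l)" for n
  have T: "(\<Sum>l<n. t l) \<le> suminf t" for n using sum_le_suminf[OF st, of "{..<n}"] t0 by auto
  have "P (Suc n) = s 0 + (\<Sum>l<n. s (Suc l))" unfolding P_def by (rule sum.lessThan_Suc_shift)
  also have "(\<Sum>l<n. s (Suc l)) \<le> (\<Sum>l<n. r * s l + t l)" by (intro sum_mono rec)
  also have "\<dots> = r * P n + (\<Sum>l<n. t l)" unfolding P_def by (simp add: sum.distrib sum_distrib_left)
  finally have "P (Suc n) \<le> s 0 + r * P n + suminf t" using T[of n] by simp
  moreover have "P n \<le> P (Suc n)" unfolding P_def using s0[of n] by simp
  ultimately have "(1 - r) * P n \<le> s 0 + suminf t" by (simp add: algebra_simps)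
  then have "P n \<le> (s 0 + suminf t) / (1 - r)" using r by (simp add: field_simps)
  then show "sum s {..<n} \<le> (s 0 + suminf t) / (1 - r)" unfolding P_def .
qed

lemma sumW:
  assumes d: "d < b"
  shows "(\<Sum>c<b. Wa b d c k l j) = (real b - 1) * a b d k l j + (if k = 0 then 0 else a b d (k-1) l j)"
proof -
  have "(\<Sum>c<b. Wa b d c k l j) = Wa b d d k l j + (\<Sum>c\<in>{..<b}-{d}. Wa b d c k l j)"
    using d by (subst sum.remove[of _ d]) auto
  also have "(\<Sum>c\<in>{..<b}-{d}. Wa b d c k l j) = (\<Sum>c\<in>{..<b}-{d}. a b d k l j)"
    by (rule sum.cong) (auto simp: Wa_def)
  also have "\<dots> = (real b - 1) * a b d k l j" using d by (simp add: of_nat_diff)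
  finally show ?thesis by (simp add: Wa_def)
qed

lemma a_rec0:
  assumes b: "b \<ge> 2" and d: "d < b"
  shows "a b d k (Suc l) 0 = ((real b - 1) * a b d k l 0 + (if k = 0 then 0 else a b d (k-1) l 0)) / real b"
  using a_rec[OF b, of d k l 0] sumW[OF d, of k l 0] by (simp add: e_def)

lemma a_le0: "b \<ge> 2 \<Longrightarrow> a b d k l m \<le> a b d k l 0"
  unfolding a_def
proof (intro sum_mono)
  fix X assume "b \<ge> 2" "X \<in> strs b l"
  then have "xv b X < 1" "0 \<le> xv b X" using xv_range[of b X] by (auto simp: strs_def)
  then have "(1 - xv b X) ^ m \<le> 1" by (intro power_le_one) auto
  then show "(if occ d X = k then (1 - xv b X) ^ m / real b ^ l else 0) \<le> (if occ d X = k then (1 - xv b X) ^ 0 / real b ^ l else 0)"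
    by (auto simp: divide_right_mono)
qed

lemma summable_a0:
  assumes b: "b \<ge> 2" and d: "d < b"
  shows "summable (\<lambda>l. a b d k l 0)"
proof (induction k)
  case 0
  show ?case
    by (rule summable_rec[where r = "(real b - 1)/real b" and t = "\<lambda>_. 0"])
       (use b in \<open>auto simp: a_nonneg a_rec0[OF b d]\<close>)
next
  case (Suc k)
  show ?case
    by (rule summable_rec[where r = "(real b - 1)/real b" and t = "\<lambda>l. a b d k l 0 / real b"])
       (use b Suc in \<open>auto simp: a_nonneg a_rec0[OF b d] add_divide_distrib intro: summable_divide\<close>)
qed

lemma summable_a:
  assumes b: "b \<ge> 2" and d: "d < b"
  shows "summable (\<lambda>l. a b d k l m)"
  by (rule summable_comparison_test'[OF summable_a0[OF b d, of k]]) (use a_le0[OF b] a_nonneg[OF b] in auto)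


definition Wv :: "nat \<Rightarrow> nat \<Rightarrow> nat \<Rightarrow> nat \<Rightarrow> nat \<Rightarrow> real" where
  "Wv b d c k j = (if c = d then (if k = 0 then 0 else v b d (k-1) j) else v b d k j)"

lemma Wa_sums:
  assumes b: "b \<ge> 2" and d: "d < b"
  shows "(\<lambda>l. Wa b d c k l j) sums Wv b d c k j"
proof -
  have "(\<lambda>l. a b d k' l j) sums v b d k' j" for k'
    using summable_a[OF b d, of k' j] v_conv[OF b summable_a[OF b d]] by (simp add: summable_sums)
  then show ?thesis unfolding Wa_def Wv_def by auto
qed

lemma v_rec:
  assumes b: "b \<ge> 2" and d: "d < b"
  shows "v b d k m = (if k = 0 then 1 else 0) + (1/real b^(m+1)) * (\<Sum>c<b. \<Sum>j\<le>m. of_nat (m choose j) * e b c^(m-j) * Wv b d c k j)"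
proof -
  have sm: "summable (\<lambda>l. a b d k l m)" by (rule summable_a[OF b d])
  have "v b d k m = (\<Sum>l. a b d k l m)" by (rule v_conv[OF b sm])
  also have "\<dots> = a b d k 0 m + (\<Sum>l. a b d k (Suc l) m)" using suminf_split_head[OF sm] by simp
  also have "(\<Sum>l. a b d k (Suc l) m) = (\<Sum>l. (1/real b^(m+1)) * (\<Sum>c<b. \<Sum>j\<le>m. of_nat (m choose j) * e b c^(m-j) * Wa b d c k l j))"
    by (simp only: a_rec[OF b])
  also have "\<dots> = (1/real b^(m+1)) * (\<Sum>c<b. \<Sum>j\<le>m. of_nat (m choose j) * e b c^(m-j) * Wv b d c k j)"
  proof -
    have "(\<lambda>l. (1/real b^(m+1)) * (\<Sum>c<b. \<Sum>j\<le>m. of_nat (m choose j) * e b c^(m-j) * Wa b d c k l j)) sums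
      ((1/real b^(m+1)) * (\<Sum>c<b. \<Sum>j\<le>m. of_nat (m choose j) * e b c^(m-j) * Wv b d c k j))"
      by (intro sums_mult sums_sum Wa_sums[OF b d])
    then show ?thesis by (rule sums_unique[symmetric])
  qed
  finally show ?thesis by (simp add: a_zero)
qed


lemma binom_sum1: "(\<Sum>j\<le>m. of_nat (m choose j) * (x::real)^(m-j)) = (x+1)^m"
  using binomial_ring[of 1 x m] by (simp add: add.commute)

lemma binom_sum_less: "(\<Sum>j<m. of_nat (m choose j) * (x::real)^(m-j)) = (x+1)^m - 1"
  using binom_sum1[of m x] by (simp add: lessThan_Suc_atMost[symmetric])

lemma binom_int: "(\<Sum>j\<le>m. of_nat (m choose j) * (x::real)^(m-j) / (real j + 1)) = ((x+1)^(m+1) - x^(m+1)) / (real m + 1)"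
proof -
  have "(\<Sum>j\<le>m. of_nat (m choose j) * x^(m-j) / (real j + 1)) = (\<Sum>j\<le>m. of_nat (Suc m choose Suc j) * x^(m-j)) / (real m + 1)"
  proof -
    have "of_nat (m choose j) / (real j + 1) = of_nat (Suc m choose Suc j) / (real m + 1)" for j
    proof -
      have "real (Suc j) * real (Suc m choose Suc j) = real (Suc m) * real (m choose j)"
        using Suc_times_binomial[of j m] by (metis of_nat_mult)
      then show ?thesis by (simp add: field_simps del: binomial_Suc_Suc)
    qed
    then have "(\<Sum>j\<le>m. of_nat (m choose j) * x^(m-j) / (real j + 1)) = (\<Sum>j\<le>m. of_nat (Suc m choose Suc j) * x^(m-j) / (real m + 1))"
      by (intro sum.cong refl) (metis (no_types, lifting) times_divide_eq_left times_divide_eq_right mult.commute)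
    then show ?thesis by (simp add: sum_divide_distrib del: binomial_Suc_Suc)
  qed
  also have "(\<Sum>j\<le>m. of_nat (Suc m choose Suc j) * x^(m-j)) = (x+1)^(m+1) - x^(m+1)"
  proof -
    have h: "(1+x)^(Suc m) = of_nat (Suc m choose 0)*1^0*x^(Suc m - 0) + (\<Sum>i\<le>m. of_nat(Suc m choose Suc i) * 1^(Suc i) * x^(Suc m - Suc i))"
      using binomial_ring[of 1 x "Suc m"] by (simp only: sum.atMost_Suc_shift)
    show ?thesis using h by (simp del: binomial_Suc_Suc power_Suc add: add.commute)
  qed
  finally show ?thesis .
qed

lemma telesc: "(\<Sum>c<b. ((real b - real c))^(m+1) - (real b - real (Suc c))^(m+1)) = real b^(m+1)"
  using sum_lessThan_telescope'[of "\<lambda>c. (real b - real c)^(m+1)" b] by simp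

lemma e_nonneg: "c < b \<Longrightarrow> e b c \<ge> 0"
  unfolding e_def by simp

lemma ident:
  "(\<Sum>c<b. \<Sum>j<m. of_nat (m choose j) * e b c^(m-j) * (real b / (real j + 1))) = (real b^(m+1) - real b) * real b / (real m + 1)"
proof -
  have "(\<Sum>j<m. of_nat (m choose j) * e b c^(m-j) * (real b / (real j + 1))) =
      real b / (real m + 1) * (((e b c + 1)^(m+1) - e b c^(m+1)) - 1)" for c
  proof -
    have "(\<Sum>j<m. of_nat (m choose j) * e b c^(m-j) / (real j + 1)) = ((e b c + 1)^(m+1) - e b c^(m+1)) / (real m + 1) - 1 / (real m + 1)"
      using binom_int[of m "e b c"] by (simp add: lessThan_Suc_atMost[symmetric])
    moreover have "(\<Sum>j<m. of_nat (m choose j) * e b c^(m-j) * (real b / (real j + 1))) = real b * (\<Sum>j<m. of_nat (m choose j) * e b c^(m-j) / (real j + 1))"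
      by (subst sum_distrib_left) (rule sum.cong; simp)
    ultimately show ?thesis by (simp add: diff_divide_distrib[symmetric])
  qed
  then have "(\<Sum>c<b. \<Sum>j<m. of_nat (m choose j) * e b c^(m-j) * (real b / (real j + 1))) =
      real b / (real m + 1) * ((\<Sum>c<b. (e b c + 1)^(m+1) - e b c^(m+1)) - real b)"
    by (simp only: sum_distrib_left[symmetric] sum_subtractf) simp
  also have "(\<Sum>c<b. (e b c + 1)^(m+1) - e b c^(m+1)) = real b^(m+1)"
    using telesc[of b m] by (simp add: e_def diff_diff_eq add.commute)
  finally show ?thesis by (simp add: field_simps)
qed


lemma sumWv:
  assumes d: "d < b"
  shows "(\<Sum>c<b. Wv b d c k j) = (real b - 1) * v b d k j + (if k = 0 then 0 else v b d (k-1) j)"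
proof -
  have "(\<Sum>c<b. Wv b d c k j) = Wv b d d k j + (\<Sum>c\<in>{..<b}-{d}. Wv b d c k j)"
    using d by (subst sum.remove[of _ d]) auto
  also have "(\<Sum>c\<in>{..<b}-{d}. Wv b d c k j) = (\<Sum>c\<in>{..<b}-{d}. v b d k j)"
    by (rule sum.cong) (auto simp: Wv_def)
  also have "\<dots> = (real b - 1) * v b d k j" using d by (simp add: of_nat_diff)
  finally show ?thesis by (simp add: Wv_def)
qed

definition Low :: "nat \<Rightarrow> nat \<Rightarrow> nat \<Rightarrow> nat \<Rightarrow> real" where
  "Low b d k m = (\<Sum>c<b. \<Sum>j<m. of_nat (m choose j) * e b c^(m-j) * Wv b d c k j)"

lemma v_rec2:
  assumes b: "b \<ge> 2" and d: "d < b"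
  shows "real b^(m+1) * v b d k m = (if k = 0 then real b^(m+1) else 0) + Low b d k m + (real b - 1) * v b d k m + (if k = 0 then 0 else v b d (k-1) m)"
proof -
  have bp: "real b^(m+1) > 0" using b by simp
  have "(\<Sum>c<b. \<Sum>j\<le>m. of_nat (m choose j) * e b c^(m-j) * Wv b d c k j) = Low b d k m + (\<Sum>c<b. Wv b d c k m)"
    unfolding Low_def by (simp add: lessThan_Suc_atMost[symmetric] sum.distrib)
  moreover have "real b^(m+1) * v b d k m = (if k = 0 then real b^(m+1) else 0) + (\<Sum>c<b. \<Sum>j\<le>m. of_nat (m choose j) * e b c^(m-j) * Wv b d c k j)"
    apply (subst v_rec[OF b d, of k m]) using bp by (simp add: distrib_left)
  ultimately show ?thesis
    using sumWv[OF d, of k m] by simp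
qed

lemma v_nonneg: "b \<ge> 2 \<Longrightarrow> d < b \<Longrightarrow> v b d k m \<ge> 0"
  using v_conv[OF _ summable_a] a_nonneg suminf_nonneg summable_a by metis

lemma v_le0: "b \<ge> 2 \<Longrightarrow> d < b \<Longrightarrow> v b d k m \<le> v b d k 0"
  using v_conv[OF _ summable_a] a_le0 suminf_le summable_a by metis

lemma v0: assumes b: "b \<ge> 2" and d: "d < b" shows "v b d k 0 = real b"
proof (induction k)
  case 0
  show ?case using v_rec2[OF b d, where k=0 and m=0] by (simp add: Low_def algebra_simps)
next
  case (Suc k)
  show ?case using v_rec2[OF b d, where k="Suc k" and m=0] Suc by (simp add: Low_def algebra_simps)
qed


lemma Low_diff_ge:
  assumes "\<And>c j. c < b \<Longrightarrow> j < m \<Longrightarrow> g c j \<le> Wv b d c k j - Wv b d c k' j"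
  shows "(\<Sum>c<b. \<Sum>j<m. of_nat (m choose j) * e b c^(m-j) * g c j) \<le> Low b d k m - Low b d k' m"
proof -
  have "Low b d k m - Low b d k' m = (\<Sum>c<b. \<Sum>j<m. of_nat (m choose j) * e b c^(m-j) * (Wv b d c k j - Wv b d c k' j))"
    unfolding Low_def by (simp add: sum_subtractf right_diff_distrib)
  moreover have "(\<Sum>c<b. \<Sum>j<m. of_nat (m choose j) * e b c^(m-j) * g c j) \<le> (\<Sum>c<b. \<Sum>j<m. of_nat (m choose j) * e b c^(m-j) * (Wv b d c k j - Wv b d c k' j))"
    using assms e_nonneg by (intro sum_mono mult_left_mono) auto
  ultimately show ?thesis by simp
qed

lemma sum_if0: "c0 < b \<Longrightarrow> (\<Sum>c<b. if c = c0 then 0 else (K::real)) = (real b - 1) * K"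
proof -
  assume c0: "c0 < b"
  have "(\<Sum>c<b. if c = c0 then 0 else K) = (if c0 = c0 then 0 else K) + (\<Sum>c\<in>{..<b}-{c0}. if c = c0 then 0 else K)"
    using c0 by (subst sum.remove[of _ c0]) auto
  also have "(\<Sum>c\<in>{..<b}-{c0}. if c = c0 then 0 else K) = (\<Sum>c\<in>{..<b}-{c0}. K)" by (rule sum.cong) auto
  finally show ?thesis using c0 by (simp add: of_nat_diff)
qed

lemma v0_lt:
  assumes b: "b \<ge> 2" and m: "m \<ge> 1"
  shows "v b 0 0 m < real b"
proof -
  have d: "0 < b" using b by simp
  define S where "S = (\<Sum>c<b. \<Sum>j\<le>m. of_nat (m choose j) * e b c^(m-j) * Wv b 0 c 0 j)"
  have S_le: "S \<le> (\<Sum>c<b. if c = 0 then 0 else real b * (e b c + 1)^m)"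
    unfolding S_def
  proof (rule sum_mono)
    fix c assume c: "c \<in> {..<b}"
    show "(\<Sum>j\<le>m. of_nat (m choose j) * e b c^(m-j) * Wv b 0 c 0 j) \<le> (if c = 0 then 0 else real b * (e b c + 1)^m)"
    proof (cases "c = 0")
      case True then show ?thesis by (simp add: Wv_def)
    next
      case False
      have "(\<Sum>j\<le>m. of_nat (m choose j) * e b c^(m-j) * Wv b 0 c 0 j) \<le> (\<Sum>j\<le>m. of_nat (m choose j) * e b c^(m-j) * real b)"
        using False c e_nonneg[of c b] v_le0[OF b d] v0[OF b d] by (intro sum_mono mult_left_mono) (auto simp: Wv_def)
      also have "\<dots> = real b * (e b c + 1)^m" using binom_sum1[of m "e b c"] by (simp add: sum_distrib_left[symmetric] mult.commute)
      finally show ?thesis using False by simp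
    qed
  qed
  have lt: "(\<Sum>c<b. if c = 0 then 0 else real b * (e b c + 1)^m) < (\<Sum>c<b. if c = 0 then 0 else real b * real b^m)"
  proof (rule sum_strict_mono_ex1)
    show "\<forall>c\<in>{..<b}. (if c = 0 then 0 else real b * (e b c + 1)^m) \<le> (if c = 0 then 0 else real b * real b^m)"
      using b by (auto simp: e_def intro!: power_mono)
    have "(e b 1 + 1)^m < real b^m" using b m by (intro power_strict_mono) (auto simp: e_def)
    then show "\<exists>c\<in>{..<b}. (if c = 0 then 0 else real b * (e b c + 1)^m) < (if c = 0 then 0 else real b * real b^m)"
      using b by (intro bexI[of _ 1]) auto
  qed simp
  have "real b^(m+1) * v b 0 0 m = real b^(m+1) + S"
    unfolding S_def using b by (subst v_rec[OF b d]) (simp add: distrib_left)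
  also have "\<dots> < real b^(m+1) + (real b - 1) * (real b * real b^m)"
    using S_le lt sum_if0[OF d, of "real b * real b^m"] by simp
  also have "\<dots> = real b^(m+1) * real b" by (simp add: algebra_simps)
  finally show ?thesis using b by simp
qed


lemma D0:
  assumes b: "b \<ge> 2" and d: "d < b"
  shows "m \<ge> 1 \<Longrightarrow> v b d 1 m < v b d 0 m"
proof (induction m rule: less_induct)
  case (less m)
  have IH: "v b d 1 j \<le> v b d 0 j" if "j < m" for j
  proof (cases "j = 0")
    case True then show ?thesis using v0[OF b d] by simp
  next
    case False then show ?thesis using less.IH[of j] that by force
  qed
  define g where "g c j = (if c = d then - v b d 0 j else 0)" for c j
  have "(\<Sum>c<b. \<Sum>j<m. of_nat (m choose j) * e b c^(m-j) * g c j) \<le> Low b d 0 m - Low b d 1 m"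
    by (rule Low_diff_ge) (use IH in \<open>auto simp: g_def Wv_def\<close>)
  moreover have "(\<Sum>c<b. \<Sum>j<m. of_nat (m choose j) * e b c^(m-j) * g c j) = - (\<Sum>j<m. of_nat (m choose j) * e b d^(m-j) * v b d 0 j)"
  proof -
    have "(\<Sum>c<b. \<Sum>j<m. of_nat (m choose j) * e b c^(m-j) * g c j) = (\<Sum>c<b. if c = d then - (\<Sum>j<m. of_nat (m choose j) * e b d^(m-j) * v b d 0 j) else 0)"
      by (rule sum.cong) (auto simp: g_def sum_negf)
    also have "\<dots> = - (\<Sum>j<m. of_nat (m choose j) * e b d^(m-j) * v b d 0 j)" using d by simp
    finally show ?thesis .
  qed
  moreover have "(\<Sum>j<m. of_nat (m choose j) * e b d^(m-j) * v b d 0 j) \<le> (\<Sum>j<m. of_nat (m choose j) * e b d^(m-j) * real b)"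
    using d e_nonneg[OF d] v_le0[OF b d] v0[OF b d] by (intro sum_mono mult_left_mono) auto
  moreover have "(\<Sum>j<m. of_nat (m choose j) * e b d^(m-j) * real b) = real b * ((e b d + 1)^m - 1)"
    using binom_sum_less[of m "e b d"] by (simp add: sum_distrib_left[symmetric] mult.commute)
  moreover have key: "real b * ((e b d + 1)^m - 1) + v b d 0 m < real b^(m+1)"
  proof (cases "d = 0")
    case True
    then show ?thesis using v0_lt[OF b less.prems] by (simp add: e_def algebra_simps)
  next
    case False
    have "(b - d)^m < b^m" using False d less.prems by (intro power_strict_mono) auto
    then have "(b - d)^m + 1 \<le> b^m" by simp
    then have "real ((b - d)^m + 1) \<le> real (b^m)" by (rule of_nat_mono)
    then have "(e b d + 1)^m + 1 \<le> real b^m" using d by (simp add: e_def of_nat_diff)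
    moreover have "v b d 0 m \<le> real b" using v_le0[OF b d] v0[OF b d] by metis
    moreover have "real b * ((e b d + 1)^m - 1) \<le> real b * (real b^m - 2)"
      using calculation(1) by (intro mult_left_mono) auto
    moreover have "real b * (real b^m - 2) = real b^(m+1) - 2 * real b" by (simp add: algebra_simps)
    ultimately show ?thesis using b by linarith
  qed
  moreover have "real b^(m+1) * v b d 0 m = real b^(m+1) + Low b d 0 m + (real b - 1) * v b d 0 m"
    using v_rec2[OF b d, where k=0 and m=m] by simp
  moreover have "real b^(m+1) * v b d 1 m = Low b d 1 m + (real b - 1) * v b d 1 m + v b d 0 m"
    using v_rec2[OF b d, where k=1 and m=m] by simp
  moreover have "real b^(m+1) - real b + 1 > 0"
  proof -
    have "real b ^ 1 \<le> real b^(m+1)" using b by (intro power_increasing) auto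
    then show ?thesis by simp
  qed
  moreover have "(real b^(m+1) - real b + 1) * (v b d 0 m - v b d 1 m) =
      real b^(m+1) * v b d 0 m - (real b - 1) * v b d 0 m - (real b^(m+1) * v b d 1 m - (real b - 1) * v b d 1 m)"
    by (simp add: algebra_simps)
  ultimately have "(real b^(m+1) - real b + 1) * (v b d 0 m - v b d 1 m) > 0"
    by linarith
  then show ?case using \<open>real b^(m+1) - real b + 1 > 0\<close> by (simp add: zero_less_mult_iff)
qed


lemma Dk:
  assumes b: "b \<ge> 2" and d: "d < b"
  shows "m \<ge> 1 \<Longrightarrow> v b d (Suc k) m < v b d k m"
proof (induction k arbitrary: m)
  case 0 then show ?case using D0[OF b d] by simp
next
  case (Suc k)
  have outer: "v b d (Suc k) j \<le> v b d k j" for j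
    using Suc.IH[of j] v0[OF b d] by (cases "j = 0") force+
  show ?case using Suc.prems
  proof (induction m rule: less_induct)
    case (less m)
    have IH: "v b d (Suc (Suc k)) j \<le> v b d (Suc k) j" if "j < m" for j
    proof (cases "j = 0")
      case True then show ?thesis using v0[OF b d] by simp
    next
      case False then show ?thesis using less.IH[of j] that by force
    qed
    have "(\<Sum>c<b. \<Sum>j<m. of_nat (m choose j) * e b c^(m-j) * 0) \<le> Low b d (Suc k) m - Low b d (Suc (Suc k)) m"
      by (rule Low_diff_ge) (use IH outer in \<open>auto simp: Wv_def\<close>)
    then have L: "0 \<le> Low b d (Suc k) m - Low b d (Suc (Suc k)) m" by simp
    have E1: "real b^(m+1) * v b d (Suc k) m = Low b d (Suc k) m + (real b - 1) * v b d (Suc k) m + v b d k m"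
      using v_rec2[OF b d, where k="Suc k" and m=m] by simp
    have E2: "real b^(m+1) * v b d (Suc (Suc k)) m = Low b d (Suc (Suc k)) m + (real b - 1) * v b d (Suc (Suc k)) m + v b d (Suc k) m"
      using v_rec2[OF b d, where k="Suc (Suc k)" and m=m] by simp
    have Q: "real b^(m+1) - real b + 1 > 0"
    proof -
      have "real b ^ 1 \<le> real b^(m+1)" using b by (intro power_increasing) auto
      then show ?thesis by simp
    qed
    have "(real b^(m+1) - real b + 1) * (v b d (Suc k) m - v b d (Suc (Suc k)) m) =
      real b^(m+1) * v b d (Suc k) m - (real b - 1) * v b d (Suc k) m - (real b^(m+1) * v b d (Suc (Suc k)) m - (real b - 1) * v b d (Suc (Suc k)) m)"
      by (simp add: algebra_simps)
    then have "(real b^(m+1) - real b + 1) * (v b d (Suc k) m - v b d (Suc (Suc k)) m) > 0"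
      using E1 E2 L Suc.IH[OF less.prems] by linarith
    then show ?case using Q by (simp add: zero_less_mult_iff)
  qed
qed

lemma vlim:
  assumes b: "b \<ge> 2" and d: "d < b"
  shows "(\<lambda>k. v b d k m) \<longlonglongrightarrow> real b / (real m + 1)"
proof (induction m rule: less_induct)
  case (less m)
  show ?case
  proof (cases "m = 0")
    case True then show ?thesis using v0[OF b d] by simp
  next
    case False
    then have m: "m \<ge> 1" by simp
    have dec: "decseq (\<lambda>k. v b d k m)"
      using Dk[OF b d m] by (intro decseq_SucI) (simp add: less_imp_le)
    obtain l where l: "(\<lambda>k. v b d k m) \<longlonglongrightarrow> l"
      by (rule decseq_convergent[OF dec, of 0]) (use v_nonneg[OF b d] in auto)
    define Lam where "Lam = (\<Sum>c<b. \<Sum>j<m. of_nat (m choose j) * e b c^(m-j) * (real b / (real j + 1)))"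
    have W: "(\<lambda>k. Wv b d c (Suc k) j) \<longlonglongrightarrow> real b / (real j + 1)" if "j < m" for c j
      using less.IH[OF that] LIMSEQ_Suc[OF less.IH[OF that]] by (cases "c = d") (simp_all add: Wv_def)
    have LowL: "(\<lambda>k. Low b d (Suc k) m) \<longlonglongrightarrow> Lam"
      unfolding Low_def Lam_def by (intro tendsto_sum tendsto_mult_left W) auto
    have eq: "real b^(m+1) * v b d (Suc k) m = Low b d (Suc k) m + (real b - 1) * v b d (Suc k) m + v b d k m" for k
      using v_rec2[OF b d, where k="Suc k" and m=m] by simp
    have t1: "(\<lambda>k. real b^(m+1) * v b d (Suc k) m) \<longlonglongrightarrow> real b^(m+1) * l"
      by (intro tendsto_mult_left LIMSEQ_Suc[OF l])
    have t2: "(\<lambda>k. real b^(m+1) * v b d (Suc k) m) \<longlonglongrightarrow> Lam + (real b - 1) * l + l"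
      unfolding eq by (intro tendsto_add LowL tendsto_mult_left LIMSEQ_Suc[OF l] l)
    have "real b^(m+1) * l = Lam + (real b - 1) * l + l" using LIMSEQ_unique[OF t1 t2] .
    then have E: "(real b^(m+1) - real b) * l = Lam" by (simp add: algebra_simps)
    have Lam: "Lam = (real b^(m+1) - real b) * (real b / (real m + 1))"
      unfolding Lam_def ident by (simp only: times_divide_eq_right)
    have pos: "real b^(m+1) - real b > 0"
    proof -
      have "1 < real b ^ m" using b m by (intro one_less_power) auto
      then have "real b * 1 < real b * real b ^ m" by (rule mult_strict_left_mono) (use b in simp)
      then show ?thesis by simp
    qed
    have "(real b^(m+1) - real b) * l = (real b^(m+1) - real b) * (real b / (real m + 1))" using E Lam by simp
    moreover have "real b^(m+1) - real b \<noteq> 0" using pos by linarith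
    ultimately have "l = real b / (real m + 1)" using mult_left_cancel by blast
    then show ?thesis using l by simp
  qed
qed


theorem mainTheorem17:
  fixes b d m :: nat
  assumes "b \<ge> 2" and "d < b" and "m \<ge> 1"
  shows "(\<forall>k. v b d k 0 = real b)
       \<and> (\<forall>k. v b d k m \<le> real b)
       \<and> (\<forall>k. v b d (Suc k) m < v b d k m)
       \<and> ((\<lambda>k. v b d k m) \<longlonglongrightarrow> real b / real (m + 1))"
proof (intro conjI allI)
  fix k
  show "v b d k 0 = real b" by (rule v0[OF assms(1,2)])
  show "v b d k m \<le> real b" using v_le0[OF assms(1,2)] v0[OF assms(1,2)] by metis
  show "v b d (Suc k) m < v b d k m" by (rule Dk[OF assms])
next
  show "(\<lambda>k. v b d k m) \<longlonglongrightarrow> real b / real (m + 1)"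
    using vlim[OF assms(1,2), of m] by (simp add: add.commute)
qed

end
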